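(* Let $p$ be an odd prime, $h\ge 1$, $f(x,z)\in\mathbb{F}_{p^h}[x,z]$, and let $\mathcal{S}\subset\mathbb{A}^3$ be the affine surface $y^p-y=f(x,z)$. For each $\gamma\in\mathbb{F}_{p^h}$ with $f(x,\gamma)$ non-constant, let $\mathcal{Z}_\gamma=V(y^p-y-f(x,z),\,z-\gamma)$, viewed as a plane curve $y^p-y=f(x,\gamma)$ in the plane $z=\gamma$. Let $\eta$ be a positive integer and $$\Gamma=\{\gamma\in\mathbb{F}_{p^h}: f(x,\gamma)\text{ non-constant and } \#\pi_x(\mathcal{Z}_\gamma(\mathbb{F}_{p^h}))\ge\eta\}.$$ Assume there are non-negative integers $\nu,\rho_1,\rho_2,\rho_3$ such that (1) $\deg(\mathcal{Z}_\gamma)\le\nu$ for all $\gamma\in\Gamma$; (2) $2\le\rho_1\le\eta$, $2\le\rho_2\le p$, and $0\le\rho_3\le p^2-1$; (3) there are at least $\rho_3+1$ values $\gamma\in\Gamma$ with $\#\mathcal{Z}_\gamma(\mathbb{F}_{p^h})\ge\nu(\eta-\rho_1+p-\rho_2)+1$. Let $T=\{(x,y,z)\in\mathcal{S}(\mathbb{F}_{p^h}): z\in\Gamma\}$ and $$V=\langle x^iy^jz^k: 0\le i\le\eta-\rho_1,\ 0\le j\le p-\rho_2,\ 0\le k\le\rho_3\rangle\subset\mathbb{F}_{p^h}[x,y,z],$$ and let $C=C(V,T)$. Then $C$ has hierarchical locality in the following sense: for every position $i$, corresponding to a point $P_i=(a,b,c)\in T$, (a) the lower code $C_{2,i}$ (the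 puncturing of $C$ to the $p$ positions of the fiber $\{(a,b+\delta,c):\delta\in\mathbb{F}_p\}\subset T$ of $\pi_{x,z}$ through $P_i$) has dimension at most $s_2=p-\rho_2+1$ and minimum distance at least $d_2=\rho_2$; (b) the middle code $C_{1,i}$ (the puncturing of $C$ to the positions of the points of $T$ with $z$-coordinate $c$, i.e. the points of $\mathcal{Z}_c(\mathbb{F}_{p^h})$) has dimension at most $s_1=(\eta-\rho_1+1)(p-\rho_2+1)$ and minimum distance at least $d_1=\rho_1\rho_2$, and contains the support of $C_{2,i}$. Furthermore the evaluation map on $V$ is injective, so $\dim C=(\eta-\rho_1+1)(p-\rho_2+1)(\rho_3+1)$.
   Context: A linear code of length $n$ over $\mathbb{F}_q$ is a subspace of $\mathbb{F}_q^n$; its minimum distance is the minimum Hamming distance between distinct codewords. For $I=\{i_1,\dots,i_s\}\subset\{1,\dots,n\}$, the punctured code $C|_I=\{(c_{i_1},\dots,c_{i_s}):(c_1,\dots,c_n)\in C\}$. For an ordered finite set $T=\{P_1,\dots,P_n\}$ of points and a vector space $V$ of polynomial functions, the evaluation code is $C(V,T)=\{(g(P_1),\dots,g(P_n)):g\in V\}$ (the ordering of $T$ is arbitrary). $\pi_x(a,b,c)=a$, $\pi_z(a,b,c)=c$, $\pi_{x,z}(a,b,c)=(a,c)$ are the coordinate projections on $\mathbb{A}^3$. $\deg(\mathcal{Z}_\gamma)$ denotes the degree of the plane curve $y^p-y=f(x,\gamma)$. *)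

theory Defs
  imports Main "HOL-Computational_Algebra.Polynomial" "HOL-Library.Extended_Nat" "HOL-Library.Function_Algebras"
begin

(* f(x,z) in F[x,z] is represented as an element of ('a poly) poly:
   outer variable x, coefficients are polynomials in z.
   fz f g is the univariate polynomial f(x,g) in x. *)
definition fz :: "'a::comm_ring_1 poly poly \<Rightarrow> 'a \<Rightarrow> 'a poly" where
  "fz f g = map_poly (\<lambda>c. poly c g) f"

definition fev :: "'a::comm_ring_1 poly poly \<Rightarrow> 'a \<Rightarrow> 'a \<Rightarrow> 'a" where
  "fev f a c = poly (fz f c) a"

definition Zpts :: "nat \<Rightarrow> 'a::comm_ring_1 poly poly \<Rightarrow> 'a \<Rightarrow> ('a \<times> 'a) set" where
  "Zpts p f g = {(a,b). b ^ p - b = fev f a g}"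

(* degree of the plane curve y^p - y = f(x,g): total degree of y^p - y - f(x,g) *)
definition deg_curve :: "nat \<Rightarrow> 'a::comm_ring_1 poly poly \<Rightarrow> 'a \<Rightarrow> nat" where
  "deg_curve p f g = max p (degree (fz f g))"

definition Gam :: "nat \<Rightarrow> 'a::comm_ring_1 poly poly \<Rightarrow> nat \<Rightarrow> 'a set" where
  "Gam p f eta = {g. degree (fz f g) \<ge> 1 \<and> card (fst ` Zpts p f g) \<ge> eta}"

definition Tset :: "nat \<Rightarrow> 'a::comm_ring_1 poly poly \<Rightarrow> nat \<Rightarrow> ('a \<times> 'a \<times> 'a) set" where
  "Tset p f eta = {(a,b,c). b ^ p - b = fev f a c \<and> c \<in> Gam p f eta}"

(* polynomials of V = <x^i y^j z^k : i<=A, j<=B, k<=K> are given by their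
   coefficient arrays supported on the box *)
definition box_coeffs :: "nat \<Rightarrow> nat \<Rightarrow> nat \<Rightarrow> (nat \<Rightarrow> nat \<Rightarrow> nat \<Rightarrow> 'a::zero) set" where
  "box_coeffs A B K = {co. \<forall>i j k. \<not> (i \<le> A \<and> j \<le> B \<and> k \<le> K) \<longrightarrow> co i j k = 0}"

definition mono_eval :: "nat \<Rightarrow> nat \<Rightarrow> nat \<Rightarrow> (nat \<Rightarrow> nat \<Rightarrow> nat \<Rightarrow> 'a::comm_ring_1)
    \<Rightarrow> 'a \<times> 'a \<times> 'a \<Rightarrow> 'a" where
  "mono_eval A B K co P = (case P of (x,y,z) \<Rightarrow>
     (\<Sum>i\<le>A. \<Sum>j\<le>B. \<Sum>k\<le>K. co i j k * x ^ i * y ^ j * z ^ k))"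

(* codewords are functions on the position set, zero outside it *)
definition eval_map :: "('a \<times> 'a \<times> 'a) set \<Rightarrow> nat \<Rightarrow> nat \<Rightarrow> nat
    \<Rightarrow> (nat \<Rightarrow> nat \<Rightarrow> nat \<Rightarrow> 'a::comm_ring_1) \<Rightarrow> ('a \<times> 'a \<times> 'a \<Rightarrow> 'a)" where
  "eval_map T A B K co = (\<lambda>P. if P \<in> T then mono_eval A B K co P else 0)"

definition eval_code :: "('a \<times> 'a \<times> 'a) set \<Rightarrow> nat \<Rightarrow> nat \<Rightarrow> nat
    \<Rightarrow> ('a \<times> 'a \<times> 'a \<Rightarrow> 'a::comm_ring_1) set" where
  "eval_code T A B K = eval_map T A B K ` box_coeffs A B K"

definition puncture :: "('i \<Rightarrow> 'a::zero) set \<Rightarrow> 'i set \<Rightarrow> ('i \<Rightarrow> 'a) set" where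
  "puncture C J = (\<lambda>c P. if P \<in> J then c P else 0) ` C"

definition code_dim :: "('i \<Rightarrow> 'a::field) set \<Rightarrow> nat" where
  "code_dim C = vector_space.dim (\<lambda>s v i. s * v i) C"

definition hamming :: "'i set \<Rightarrow> ('i \<Rightarrow> 'a) \<Rightarrow> ('i \<Rightarrow> 'a) \<Rightarrow> nat" where
  "hamming J c d = card {P \<in> J. c P \<noteq> d P}"

(* minimum distance (infinity for codes with fewer than two codewords) *)
definition min_dist :: "'i set \<Rightarrow> ('i \<Rightarrow> 'a) set \<Rightarrow> enat" where
  "min_dist J C = (INF cd \<in> {(c,d). c \<in> C \<and> d \<in> C \<and> c \<noteq> d}. enat (hamming J (fst cd) (snd cd)))"

end

theory Submission
  imports Defs "HOL-Number_Theory.Residues" "HOL-Computational_Algebra.Primes"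
begin

lemma vs_fun: "vector_space (\<lambda>(s::'a::field) (v::'i \<Rightarrow> 'a) i. s * v i)"
  by unfold_locales (auto simp: fun_eq_iff algebra_simps)

lemma sum_fun_apply: "(sum g J) P = (\<Sum>j\<in>J. g j P)"
  by (induct J rule: infinite_finite_induct) auto

lemma sum_pow_roots:
  fixes c :: "nat \<Rightarrow> 'a::field"
  assumes "\<exists>i\<le>n. c i \<noteq> 0"
  shows "finite {x. (\<Sum>i\<le>n. c i * x^i) = 0} \<and> card {x. (\<Sum>i\<le>n. c i * x^i) = 0} \<le> n"
proof -
  define q where "q = (\<Sum>i\<le>n. Polynomial.monom (c i) i)"
  have pq: "poly q x = (\<Sum>i\<le>n. c i * x^i)" for x
    by (simp add: q_def poly_sum poly_monom)
  have cq: "Polynomial.coeff q j = (if j \<le> n then c j else 0)" for j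
    by (simp add: q_def Polynomial.coeff_sum Polynomial.coeff_monom)
  have "q \<noteq> 0" using assms cq by (metis Polynomial.coeff_0)
  moreover have "degree q \<le> n" by (rule degree_le) (auto simp: cq)
  ultimately show ?thesis using card_poly_roots_bound[of q] poly_roots_finite[of q]
    by (simp add: pq)
qed

lemma sum_pow_zero:
  fixes c :: "nat \<Rightarrow> 'a::field"
  assumes "finite S" "card S > n" "\<forall>x\<in>S. (\<Sum>i\<le>n. c i * x^i) = 0"
  shows "\<forall>i\<le>n. c i = 0"
proof (rule ccontr)
  assume "\<not> ?thesis"
  then have h: "\<exists>i\<le>n. c i \<noteq> 0" by auto
  have "S \<subseteq> {x. (\<Sum>i\<le>n. c i * x^i) = 0}" using assms by auto
  then have "card S \<le> card {x. (\<Sum>i\<le>n. c i * x^i) = 0}"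
    using sum_pow_roots[OF h] by (intro card_mono) auto
  then show False using sum_pow_roots[OF h] assms by linarith
qed

lemma char_p:
  assumes "prime p" "card (UNIV :: 'a::{finite,field} set) = p ^ h" "h \<ge> 1"
  shows "CHAR('a) = p"
proof -
  have "CHAR('a) > 0" by (rule finite_imp_CHAR_pos) simp
  then have pc: "prime CHAR('a)" by (rule prime_CHAR_semidom)
  have "CHAR('a) dvd p ^ h" using CHAR_dvd_CARD[where 'a='a] assms by simp
  then have "CHAR('a) dvd p" using pc prime_dvd_power by blast
  then show ?thesis using pc assms(1) by (simp add: primes_dvd_imp_eq)
qed

lemma frob_nat:
  assumes "prime CHAR('a::comm_ring_1)"
  shows "(of_nat d :: 'a) ^ CHAR('a) = of_nat d"
proof (induct d)
  case 0 then show ?case using assms by (simp add: prime_gt_0_nat power_0_left)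
next
  case (Suc d)
  then show ?case using freshmans_dream[OF assms refl, of "of_nat d" 1] by (simp add: add_ac)
qed

lemma shift_sol:
  assumes "prime CHAR('a::comm_ring_1)"
  shows "(b + of_nat d :: 'a) ^ CHAR('a) - (b + of_nat d) = b ^ CHAR('a) - b"
  using freshmans_dream[OF assms refl, of b "of_nat d"] frob_nat[OF assms, of d] by simp

lemma of_nat_inj_char:
  assumes "d < CHAR('a::comm_ring_1)" "d' < CHAR('a)" "(of_nat d :: 'a) = of_nat d'"
  shows "d = d'"
proof -
  have "(of_nat (d - d') :: 'a) = 0 \<and> (of_nat (d' - d) :: 'a) = 0"
    using assms(3) by (metis cancel_comm_monoid_add_class.diff_cancel diff_is_0_eq nat_le_linear of_nat_diff of_nat_0)
  then have "CHAR('a) dvd (d - d') \<and> CHAR('a) dvd (d' - d)" by (simp add: of_nat_eq_0_iff_char_dvd)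
  then show ?thesis using assms(1,2)
    by (metis diff_is_0_eq dvd_imp_le less_imp_diff_less nat_le_linear not_less neq0_conv le_antisym)
qed


lemma me_y: "mono_eval A B K co (x,y,z) =
  (\<Sum>j\<le>B. (\<Sum>i\<le>A. (\<Sum>k\<le>K. co i j k * z^k) * x^i) * y^j)"
  unfolding mono_eval_def
  by (simp add: sum_distrib_right sum_distrib_left mult_ac) (rule sum.swap)

lemma me_xy: "mono_eval A B K co (x,y,z) =
  (\<Sum>i\<le>A. \<Sum>j\<le>B. (\<Sum>k\<le>K. co i j k * z^k) * (x^i * y^j))"
  unfolding mono_eval_def
  by (simp add: sum_distrib_right sum_distrib_left mult_ac)

lemma me_cart: "mono_eval A B K co (x,y,z) =
  (\<Sum>(i,j,k)\<in>{..A}\<times>{..B}\<times>{..K}. co i j k * (x^i * y^j * z^k))"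
proof -
  have "mono_eval A B K co (x,y,z) = (\<Sum>i\<le>A. \<Sum>(j,k)\<in>{..B}\<times>{..K}. co i j k * (x^i * y^j * z^k))"
    unfolding mono_eval_def by (simp add: sum.cartesian_product mult_ac)
  also have "\<dots> = (\<Sum>(i,j,k)\<in>{..A}\<times>{..B}\<times>{..K}. co i j k * (x^i * y^j * z^k))"
    by (subst sum.cartesian_product) (simp add: split_def)
  finally show ?thesis .
qed

lemma me_diff: "mono_eval A B K (\<lambda>i j k. co1 i j k - co2 i j k) P = mono_eval A B K co1 P - mono_eval A B K co2 P"
  unfolding mono_eval_def by (cases P) (simp add: sum_subtractf left_diff_distrib)

lemma box_diff: "(co1::nat\<Rightarrow>nat\<Rightarrow>nat\<Rightarrow>'a::ab_group_add) \<in> box_coeffs A B K \<Longrightarrow> co2 \<in> box_coeffs A B K \<Longrightarrow> (\<lambda>i j k. co1 i j k - co2 i j k) \<in> box_coeffs A B K"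
  unfolding box_coeffs_def by auto


lemma inj_shift:
  "inj_on (\<lambda>d. (b::'a::comm_ring_1) + of_nat d) {..<CHAR('a)}"
  by (rule inj_onI) (auto intro: of_nat_inj_char)

lemma card_shift:
  "card ((\<lambda>d. (b::'a::comm_ring_1) + of_nat d) ` {..<CHAR('a)}) = CHAR('a)"
  using card_image[OF inj_shift] by simp

lemma fiber_zero:
  fixes cj :: "nat \<Rightarrow> 'a::field"
  assumes "B < CHAR('a)" "\<forall>d<CHAR('a). (\<Sum>j\<le>B. cj j * (b + of_nat d)^j) = 0"
  shows "\<forall>j\<le>B. cj j = 0"
  apply (rule sum_pow_zero[where S="(\<lambda>d. b + of_nat d) ` {..<CHAR('a)}"])
  using assms card_shift[of b] by auto

lemma fiber_nonzero:
  fixes cj :: "nat \<Rightarrow> 'a::field"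
  assumes "B < CHAR('a)" "\<exists>j\<le>B. cj j \<noteq> 0"
  shows "CHAR('a) - B \<le> card {d. d < CHAR('a) \<and> (\<Sum>j\<le>B. cj j * (b + of_nat d)^j) \<noteq> 0}"
proof -
  define Z where "Z = {d. d < CHAR('a) \<and> (\<Sum>j\<le>B. cj j * (b + of_nat d)^j) = 0}"
  define N where "N = {d. d < CHAR('a) \<and> (\<Sum>j\<le>B. cj j * (b + of_nat d)^j) \<noteq> 0}"
  have un: "{..<CHAR('a)} = Z \<union> N" and dj: "Z \<inter> N = {}" by (auto simp: Z_def N_def)
  have fin: "finite Z" "finite N" by (auto simp: Z_def N_def)
  have "card {..<CHAR('a)} = card Z + card N" using card_Un_disjoint[OF fin dj] un by simp
  then have cN: "card N = CHAR('a) - card Z" by simp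
  have "inj_on (\<lambda>d. b + of_nat d) Z" using inj_shift[of b] by (rule inj_on_subset) (auto simp: Z_def)
  then have "card Z = card ((\<lambda>d. b + of_nat d) ` Z)" by (simp add: card_image)
  also have "\<dots> \<le> card {x. (\<Sum>j\<le>B. cj j * x^j) = 0}"
    using sum_pow_roots[OF assms(2)] by (intro card_mono) (auto simp: Z_def)
  also have "\<dots> \<le> B" using sum_pow_roots[OF assms(2)] by simp
  finally show ?thesis using cN N_def by simp
qed

lemma min_dist_ge:
  assumes "\<And>c d. c \<in> C \<Longrightarrow> d \<in> C \<Longrightarrow> c \<noteq> d \<Longrightarrow> n \<le> hamming J c d"
  shows "enat n \<le> min_dist J C"
  unfolding min_dist_def by (rule INF_greatest) (use assms in auto)

lemma dist_generic:
  assumes "J \<subseteq> T"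
    and "\<And>co. co \<in> box_coeffs A B K \<Longrightarrow> \<exists>P\<in>J. mono_eval A B K co P \<noteq> 0 \<Longrightarrow>
            n \<le> card {P\<in>J. mono_eval A B K co P \<noteq> (0::'a::comm_ring_1)}"
  shows "enat n \<le> min_dist J (puncture (eval_code T A B K) J)"
proof (rule min_dist_ge)
  fix c d assume "c \<in> puncture (eval_code T A B K) J" "d \<in> puncture (eval_code T A B K) J" "c \<noteq> d"
  then obtain co1 co2 where co: "co1 \<in> box_coeffs A B K" "co2 \<in> box_coeffs A B K"
    and c: "c = (\<lambda>P. if P \<in> J then eval_map T A B K co1 P else 0)"
    and d: "d = (\<lambda>P. if P \<in> J then eval_map T A B K co2 P else 0)"
    by (auto simp: puncture_def eval_code_def)
  define co where "co = (\<lambda>i j k. co1 i j k - co2 i j k)"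
  have eq: "{P\<in>J. c P \<noteq> d P} = {P\<in>J. mono_eval A B K co P \<noteq> 0}"
    using assms(1) by (auto simp: c d eval_map_def co_def me_diff)
  have "\<exists>P\<in>J. mono_eval A B K co P \<noteq> 0"
  proof (rule ccontr)
    assume "\<not> ?thesis"
    then have "{P\<in>J. c P \<noteq> d P} = {}" using eq by auto
    then have "c = d" by (auto simp: fun_eq_iff c d)
    then show False using \<open>c \<noteq> d\<close> by simp
  qed
  then have "n \<le> card {P\<in>J. mono_eval A B K co P \<noteq> 0}"
    using assms(2) box_diff[OF co] co_def by auto
  then show "n \<le> hamming J c d" by (simp add: hamming_def eq)
qed

lemma dim_generic:
  fixes W :: "'i \<Rightarrow> ('a \<times> 'a \<times> 'a \<Rightarrow> 'a::field)"
  assumes "finite I"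
    and "\<And>co. co \<in> box_coeffs A B K \<Longrightarrow> \<exists>s. (\<lambda>P. if P \<in> J then eval_map T A B K co P else 0) = (\<lambda>P. \<Sum>t\<in>I. s t * W t P)"
  shows "code_dim (puncture (eval_code T A B K) J) \<le> card I"
proof -
  interpret V: vector_space "\<lambda>(s::'a) (v::'a \<times> 'a \<times> 'a \<Rightarrow> 'a) i. s * v i" by (rule vs_fun)
  have "puncture (eval_code T A B K) J \<subseteq> V.span (W ` I)"
  proof
    fix c assume "c \<in> puncture (eval_code T A B K) J"
    then obtain co where co: "co \<in> box_coeffs A B K" and c: "c = (\<lambda>P. if P \<in> J then eval_map T A B K co P else 0)"
      by (auto simp: puncture_def eval_code_def)
    obtain s where s: "c = (\<lambda>P. \<Sum>t\<in>I. s t * W t P)" using assms(2)[OF co] c by auto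
    have "c = (\<Sum>t\<in>I. (\<lambda>i. s t * W t i))" by (simp add: s fun_eq_iff sum_fun_apply)
    also have "\<dots> \<in> V.span (W ` I)"
      by (intro V.span_sum V.span_scale[of "W _" _ "s _", simplified] V.span_base) auto
    finally show "c \<in> V.span (W ` I)" .
  qed
  then have "V.dim (puncture (eval_code T A B K) J) \<le> card (W ` I)"
    using assms(1) by (intro V.dim_le_card) auto
  also have "\<dots> \<le> card I" using assms(1) by (rule card_image_le)
  finally show ?thesis by (simp add: code_dim_def)
qed


lemma fiber_T:
  assumes "prime CHAR('a::comm_ring_1)" "p = CHAR('a)" "(a,b,c) \<in> Tset p (f::'a poly poly) eta"
  shows "(a, b + of_nat d, c) \<in> Tset p f eta"
  using assms shift_sol[OF assms(1), of b d] by (simp add: Tset_def)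

lemma inj_zero:
  fixes f :: "'a::{finite,field} poly poly"
  assumes "prime CHAR('a)" "p = CHAR('a)" "A < eta" "B < p" "K < card (Gam p f eta)"
    "co \<in> box_coeffs A B K" "\<forall>P\<in>Tset p f eta. mono_eval A B K co P = 0"
  shows "co = (\<lambda>i j k. 0)"
proof -
  have step1: "\<forall>j\<le>B. (\<Sum>i\<le>A. (\<Sum>k\<le>K. co i j k * g^k) * a^i) = 0"
    if g: "g \<in> Gam p f eta" and a: "a \<in> fst ` Zpts p f g" for g a
  proof -
    obtain b where "(a,b) \<in> Zpts p f g" using a by auto
    then have T: "(a,b,g) \<in> Tset p f eta" using g by (simp add: Zpts_def Tset_def)
    have "\<forall>d<CHAR('a). (\<Sum>j\<le>B. (\<Sum>i\<le>A. (\<Sum>k\<le>K. co i j k * g^k) * a^i) * (b + of_nat d)^j) = 0"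
      using fiber_T[OF assms(1,2) T] assms(7) by (simp add: me_y[symmetric])
    then show ?thesis
      using fiber_zero[of B "\<lambda>j. (\<Sum>i\<le>A. (\<Sum>k\<le>K. co i j k * g^k) * a^i)" b] assms(2,4) by blast
  qed
  have step2: "\<forall>i\<le>A. (\<Sum>k\<le>K. co i j k * g^k) = 0" if g: "g \<in> Gam p f eta" and j: "j \<le> B" for g j
  proof (rule sum_pow_zero[where S="fst ` Zpts p f g"])
    show "finite (fst ` Zpts p f g)" by simp
    show "A < card (fst ` Zpts p f g)" using g assms(3) by (simp add: Gam_def)
    show "\<forall>x\<in>fst ` Zpts p f g. (\<Sum>i\<le>A. (\<Sum>k\<le>K. co i j k * g ^ k) * x ^ i) = 0"
      using step1[OF g] j by blast
  qed
  have step3: "co i j k = 0" if "i \<le> A" "j \<le> B" "k \<le> K" for i j k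
  proof -
    have "\<forall>k\<le>K. co i j k = 0"
      by (rule sum_pow_zero[where S="Gam p f eta"]) (use assms(5) step2 that in auto)
    then show ?thesis using that by simp
  qed
  show ?thesis
  proof (intro ext)
    fix i j k
    show "co i j k = 0"
    proof (cases "i \<le> A \<and> j \<le> B \<and> k \<le> K")
      case True then show ?thesis using step3 by blast
    next
      case False then show ?thesis using assms(6) by (simp add: box_coeffs_def)
    qed
  qed
qed


definition ind :: "nat \<times> nat \<times> nat \<Rightarrow> nat \<Rightarrow> nat \<Rightarrow> nat \<Rightarrow> 'a::{zero,one}" where
  "ind t = (\<lambda>i j k. if (i,j,k) = t then 1 else 0)"

lemma me_ind:
  assumes "t \<in> {..A}\<times>{..B}\<times>{..K}"
  shows "mono_eval A B K (ind t) (x,y,z) = x^fst t * y^fst (snd t) * (z::'a::comm_ring_1)^snd (snd t)"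
proof -
  have "mono_eval A B K (ind t) (x,y,z) = (\<Sum>u\<in>{..A}\<times>{..B}\<times>{..K}. if u = t then x^fst u * y^fst (snd u) * z^snd (snd u) else 0)"
    unfolding me_cart by (intro sum.cong) (auto simp: ind_def)
  also have "\<dots> = x^fst t * y^fst (snd t) * z^snd (snd t)"
    using assms by (subst sum.delta) auto
  finally show ?thesis .
qed

lemma eval_map_sum:
  "eval_map T A B K co = (\<Sum>t\<in>{..A}\<times>{..B}\<times>{..K}. (\<lambda>P. co (fst t) (fst (snd t)) (snd (snd t)) * eval_map T A B K (ind t) P))"
proof (rule ext)
  fix P :: "'a::comm_ring_1 \<times> 'a \<times> 'a"
  obtain x y z where P: "P = (x,y,z)" by (cases P)
  show "eval_map T A B K co P = (\<Sum>t\<in>{..A}\<times>{..B}\<times>{..K}. (\<lambda>P. co (fst t) (fst (snd t)) (snd (snd t)) * eval_map T A B K (ind t) P)) P"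
  proof (cases "P \<in> T")
    case True
    then show ?thesis
      by (simp add: eval_map_def P sum_fun_apply me_ind cong: sum.cong) (simp add: me_cart split_def)
  qed (simp add: eval_map_def sum_fun_apply)
qed

lemma full_dim:
  fixes T :: "('a::field \<times> 'a \<times> 'a) set"
  assumes inj: "inj_on (eval_map T A B K) (box_coeffs A B K)"
  shows "code_dim (eval_code T A B K) = (A+1)*(B+1)*(K+1)"
proof -
  interpret V: vector_space "\<lambda>(s::'a) (v::'a \<times> 'a \<times> 'a \<Rightarrow> 'a) i. s * v i" by (rule vs_fun)
  define I where "I = {..A}\<times>{..B}\<times>{..K}"
  define E where "E t = eval_map T A B K (ind t)" for t
  have finI: "finite I" by (simp add: I_def)
  have indbox: "ind t \<in> box_coeffs A B K" if "t \<in> I" for t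
    using that by (auto simp: I_def ind_def box_coeffs_def)
  have zbox: "(\<lambda>i j k. 0) \<in> box_coeffs A B K" by (simp add: box_coeffs_def)
  have ez: "eval_map T A B K (\<lambda>i j k. 0) = 0" by (simp add: fun_eq_iff eval_map_def mono_eval_def)
  have injE: "inj_on E I"
  proof (rule inj_onI)
    fix t t' assume tt: "t \<in> I" "t' \<in> I" "E t = E t'"
    then have "(ind t :: nat \<Rightarrow> nat \<Rightarrow> nat \<Rightarrow> 'a) = ind t'"
      using inj indbox[OF tt(1)] indbox[OF tt(2)] unfolding E_def inj_on_def by blast
    then have "(ind t :: nat \<Rightarrow> nat \<Rightarrow> nat \<Rightarrow> 'a) (fst t) (fst (snd t)) (snd (snd t)) = ind t' (fst t) (fst (snd t)) (snd (snd t))" by simp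
    then show "t = t'" by (auto simp: ind_def split: if_splits)
  qed
  have sumE: "eval_map T A B K co = (\<Sum>t\<in>I. (\<lambda>P. co (fst t) (fst (snd t)) (snd (snd t)) * E t P))" for co
    unfolding I_def E_def by (rule eval_map_sum)
  have indep: "V.independent (E ` I)"
  proof (rule V.independent_if_scalars_zero)
    show "finite (E ` I)" using finI by simp
    fix u v assume s0: "(\<Sum>x\<in>E ` I. (\<lambda>i. u x * x i)) = 0" and v: "v \<in> E ` I"
    define co where "co = (\<lambda>i j k. if (i,j,k) \<in> I then u (E (i,j,k)) else 0)"
    have cobox: "co \<in> box_coeffs A B K" by (auto simp: co_def box_coeffs_def I_def)
    have "eval_map T A B K co = (\<Sum>t\<in>I. (\<lambda>P. u (E t) * E t P))"
      unfolding sumE by (intro sum.cong) (auto simp: co_def)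
    also have "\<dots> = (\<Sum>x\<in>E ` I. (\<lambda>i. u x * x i))" using injE by (simp add: sum.reindex)
    also have "\<dots> = eval_map T A B K (\<lambda>i j k. 0)" using s0 ez by simp
    finally have "co = (\<lambda>i j k. 0)" using inj cobox zbox by (auto simp: inj_on_def)
    moreover obtain t where "t \<in> I" "v = E t" using v by auto
    ultimately show "u v = 0"
    proof -
      assume c0: "co = (\<lambda>i j k. 0)" and t: "t \<in> I" "v = E t"
      have "co (fst t) (fst (snd t)) (snd (snd t)) = 0" using c0 by simp
      then show ?thesis using t by (simp add: co_def)
    qed
  qed
  have "V.span (E ` I) = V.span (eval_code T A B K)"
  proof (rule V.span_eq[THEN iffD2], intro conjI)
    show "E ` I \<subseteq> V.span (eval_code T A B K)"
      using indbox by (auto simp: E_def eval_code_def intro!: V.span_base)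
    show "eval_code T A B K \<subseteq> V.span (E ` I)"
    proof
      fix c assume "c \<in> eval_code T A B K"
      then obtain co where "c = eval_map T A B K co" by (auto simp: eval_code_def)
      then have "c = (\<Sum>t\<in>I. (\<lambda>P. co (fst t) (fst (snd t)) (snd (snd t)) * E t P))" using sumE by simp
      also have "\<dots> \<in> V.span (E ` I)"
        by (intro V.span_sum V.span_scale[of "E _" _ "co _ _ _", simplified] V.span_base) auto
      finally show "c \<in> V.span (E ` I)" .
    qed
  qed
  then have "V.dim (eval_code T A B K) = V.dim (E ` I)" using V.span_eq_dim by metis
  also have "\<dots> = card (E ` I)" using indep by (rule V.dim_eq_card_independent)
  also have "\<dots> = card I" using injE by (rule card_image)
  finally show ?thesis by (simp add: code_dim_def I_def card_cartesian_product algebra_simps)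
qed


lemma dist_F2:
  fixes f :: "'a::{finite,field} poly poly"
  assumes "prime CHAR('a)" "p = CHAR('a)" "(a,b,c) \<in> Tset p f eta" "B < p"
    and F2: "F2 = {(a, b + of_nat d, c) | d. d < p}"
    and nz: "\<exists>P\<in>F2. mono_eval A B K co P \<noteq> 0"
  shows "p - B \<le> card {P\<in>F2. mono_eval A B K co P \<noteq> 0}"
proof -
  define cj where "cj j = (\<Sum>i\<le>A. (\<Sum>k\<le>K. co i j k * c^k) * a^i)" for j
  have ev: "mono_eval A B K co (a, y, c) = (\<Sum>j\<le>B. cj j * y^j)" for y
    by (simp add: me_y cj_def)
  have ex: "\<exists>j\<le>B. cj j \<noteq> 0"
  proof (rule ccontr)
    assume "\<not> ?thesis"
    then have "mono_eval A B K co P = 0" if "P \<in> F2" for P using that by (auto simp: F2 ev)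
    then show False using nz by auto
  qed
  define D where "D = {d. d < CHAR('a) \<and> (\<Sum>j\<le>B. cj j * (b + of_nat d)^j) \<noteq> 0}"
  have "p - B \<le> card D" using fiber_nonzero[OF _ ex, of b] assms(2,4) by (simp add: D_def)
  also have "card D = card ((\<lambda>d. (a, b + of_nat d, c)) ` D)"
  proof (rule card_image[symmetric])
    show "inj_on (\<lambda>d. (a, b + of_nat d, c)) D"
      using inj_shift[of b] by (auto simp: inj_on_def D_def)
  qed
  also have "\<dots> \<le> card {P\<in>F2. mono_eval A B K co P \<noteq> 0}"
    by (intro card_mono) (auto simp: D_def F2 ev assms(2))
  finally show ?thesis .
qed

lemma dim_F2:
  fixes f :: "'a::{finite,field} poly poly"
  assumes "prime CHAR('a)" "p = CHAR('a)" "(a,b,c) \<in> Tset p f eta"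
    and F2: "F2 = {(a, b + of_nat d, c) | d. d < p}"
  shows "code_dim (puncture (eval_code (Tset p f eta) A B K) F2) \<le> B + 1"
proof -
  have "code_dim (puncture (eval_code (Tset p f eta) A B K) F2) \<le> card {..B}"
  proof (rule dim_generic[where W="\<lambda>j P. if P \<in> F2 then fst (snd P) ^ j else 0"])
    fix co :: "nat \<Rightarrow> nat \<Rightarrow> nat \<Rightarrow> 'a"
    define cj where "cj j = (\<Sum>i\<le>A. (\<Sum>k\<le>K. co i j k * c^k) * a^i)" for j
    have ev: "mono_eval A B K co (a, y, c) = (\<Sum>j\<le>B. cj j * y^j)" for y
      by (simp add: me_y cj_def)
    have inT: "P \<in> Tset p f eta" if "P \<in> F2" for P
      using that fiber_T[OF assms(1,2,3)] by (auto simp: F2)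
    show "\<exists>s. (\<lambda>P. if P \<in> F2 then eval_map (Tset p f eta) A B K co P else 0) =
           (\<lambda>P. \<Sum>t\<le>B. s t * (if P \<in> F2 then fst (snd P) ^ t else 0))"
    proof (rule exI[of _ cj], rule ext)
      fix P :: "'a \<times> 'a \<times> 'a"
      show "(if P \<in> F2 then eval_map (Tset p f eta) A B K co P else 0) =
           (\<Sum>t\<le>B. cj t * (if P \<in> F2 then fst (snd P) ^ t else 0))"
      proof (cases "P \<in> F2")
        case True
        then obtain d where "P = (a, b + of_nat d, c)" by (auto simp: F2)
        then show ?thesis using True inT[OF True] by (simp add: eval_map_def ev)
      qed simp
    qed
  qed simp
  then show ?thesis by simp
qed

lemma dim_F1:
  fixes f :: "'a::{finite,field} poly poly"
  assumes F1: "F1 = {Q \<in> Tset p f eta. snd (snd Q) = c}"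
  shows "code_dim (puncture (eval_code (Tset p f eta) A B K) F1) \<le> (A+1)*(B+1)"
proof -
  have "code_dim (puncture (eval_code (Tset p f eta) A B K) F1) \<le> card ({..A}\<times>{..B})"
  proof (rule dim_generic[where W="\<lambda>t P. if P \<in> F1 then fst P ^ fst t * fst (snd P) ^ snd t else 0"])
    fix co :: "nat \<Rightarrow> nat \<Rightarrow> nat \<Rightarrow> 'a"
    define e where "e t = (\<Sum>k\<le>K. co (fst t) (snd t) k * c^k)" for t
    have ev: "mono_eval A B K co (x, y, c) = (\<Sum>t\<in>{..A}\<times>{..B}. e t * (x^fst t * y^snd t))" for x y
      by (simp add: me_xy e_def sum.cartesian_product split_def)
    show "\<exists>s. (\<lambda>P. if P \<in> F1 then eval_map (Tset p f eta) A B K co P else 0) =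
           (\<lambda>P. \<Sum>t\<in>{..A}\<times>{..B}. s t * (if P \<in> F1 then fst P ^ fst t * fst (snd P) ^ snd t else 0))"
    proof (rule exI[of _ e], rule ext)
      fix P :: "'a \<times> 'a \<times> 'a"
      obtain x y z where P: "P = (x,y,z)" by (cases P)
      show "(if P \<in> F1 then eval_map (Tset p f eta) A B K co P else 0) =
           (\<Sum>t\<in>{..A}\<times>{..B}. e t * (if P \<in> F1 then fst P ^ fst t * fst (snd P) ^ snd t else 0))"
        by (cases "P \<in> F1") (auto simp: F1 P eval_map_def ev)
    qed
  qed simp
  then show ?thesis by (simp add: card_cartesian_product)
qed


lemma dist_F1:
  fixes f :: "'a::{finite,field} poly poly"
  assumes "prime CHAR('a)" "p = CHAR('a)" "(a0,b0,c) \<in> Tset p f eta" "B < p"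
    and F1: "F1 = {Q \<in> Tset p f eta. snd (snd Q) = c}"
    and nz: "\<exists>P\<in>F1. mono_eval A B K co P \<noteq> 0"
  shows "(eta - A) * (p - B) \<le> card {P\<in>F1. mono_eval A B K co P \<noteq> 0}"
proof -
  define e where "e i j = (\<Sum>k\<le>K. co i j k * c^k)" for i j
  have ev: "mono_eval A B K co (x, y, c) = (\<Sum>j\<le>B. (\<Sum>i\<le>A. e i j * x^i) * y^j)" for x y
    by (simp add: me_y e_def)
  have ev2: "mono_eval A B K co (x, y, c) = (\<Sum>i\<le>A. \<Sum>j\<le>B. e i j * (x^i * y^j))" for x y
    by (simp add: me_xy e_def)
  have ex: "\<exists>j0\<le>B. \<exists>i\<le>A. e i j0 \<noteq> 0"
  proof (rule ccontr)
    assume "\<not> ?thesis"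
    then have "mono_eval A B K co P = 0" if "P \<in> F1" for P
      using that by (cases P) (auto simp: F1 ev2)
    then show False using nz by auto
  qed
  then obtain j0 where j0: "j0 \<le> B" "\<exists>i\<le>A. e i j0 \<noteq> 0" by auto
  define Bad where "Bad = {x. (\<Sum>i\<le>A. e i j0 * x^i) = 0}"
  have cBad: "card Bad \<le> A" using sum_pow_roots[OF j0(2)] by (simp add: Bad_def)
  define Xs where "Xs = fst ` Zpts p f c"
  have cg: "c \<in> Gam p f eta" using assms(3) by (simp add: Tset_def)
  then have cXs: "eta \<le> card Xs" by (simp add: Gam_def Xs_def)
  define Good where "Good = Xs - Bad"
  have "card Xs \<le> card (Good \<union> Bad)" by (intro card_mono) (auto simp: Good_def)
  also have "\<dots> \<le> card Good + card Bad" by (rule card_Un_le)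
  finally have cGood: "eta - A \<le> card Good" using cXs cBad by linarith
  define bx where "bx x = (SOME b. (x,b) \<in> Zpts p f c)" for x
  have bx: "(x, bx x) \<in> Zpts p f c" if "x \<in> Xs" for x
    using that unfolding Xs_def bx_def by (auto intro: someI)
  define N where "N x = (\<lambda>d. (x, bx x + of_nat d, c)) `
      {d. d < CHAR('a) \<and> (\<Sum>j\<le>B. (\<Sum>i\<le>A. e i j * x^i) * (bx x + of_nat d)^j) \<noteq> 0}" for x
  have cN: "p - B \<le> card (N x)" if "x \<in> Good" for x
  proof -
    have ex2: "\<exists>j\<le>B. (\<Sum>i\<le>A. e i j * x^i) \<noteq> 0"
      using that j0 by (auto simp: Good_def Bad_def)
    have inj: "inj_on (\<lambda>d. (x, bx x + of_nat d, c)) {..<CHAR('a)}"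
      using inj_shift[of "bx x"] by (auto simp: inj_on_def)
    have "card (N x) = card {d. d < CHAR('a) \<and> (\<Sum>j\<le>B. (\<Sum>i\<le>A. e i j * x^i) * (bx x + of_nat d)^j) \<noteq> 0}"
      unfolding N_def by (rule card_image) (rule inj_on_subset[OF inj], auto)
    then show ?thesis using fiber_nonzero[OF _ ex2, of "bx x"] assms(2,4) by simp
  qed
  have sub: "(\<Union>x\<in>Good. N x) \<subseteq> {P\<in>F1. mono_eval A B K co P \<noteq> 0}"
  proof
    fix P assume "P \<in> (\<Union>x\<in>Good. N x)"
    then obtain x d where x: "x \<in> Good" and P: "P = (x, bx x + of_nat d, c)"
      and nzd: "(\<Sum>j\<le>B. (\<Sum>i\<le>A. e i j * x^i) * (bx x + of_nat d)^j) \<noteq> 0"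
      by (auto simp: N_def)
    have "(x, bx x, c) \<in> Tset p f eta"
      using bx[of x] x cg by (auto simp: Good_def Zpts_def Tset_def)
    then have "P \<in> Tset p f eta" using fiber_T[OF assms(1,2)] P by blast
    then show "P \<in> {P\<in>F1. mono_eval A B K co P \<noteq> 0}" using nzd by (simp add: F1 P ev)
  qed
  have finN: "finite (N x)" for x by simp
  have disj: "\<forall>x\<in>Good. \<forall>y\<in>Good. x \<noteq> y \<longrightarrow> N x \<inter> N y = {}" by (auto simp: N_def)
  have "(eta - A) * (p - B) \<le> card Good * (p - B)" using cGood by simp
  also have "\<dots> \<le> (\<Sum>x\<in>Good. card (N x))"
    using sum_bounded_below[of Good "p - B" "\<lambda>x. card (N x)"] cN by simp
  also have "\<dots> = card (\<Union>x\<in>Good. N x)" by (rule card_UN_disjoint[symmetric]) (use disj in auto)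
  also have "\<dots> \<le> card {P\<in>F1. mono_eval A B K co P \<noteq> 0}" by (intro card_mono sub) simp
  finally show ?thesis .
qed


theorem theorem3p1:
  fixes p h eta nu rho1 rho2 rho3 :: nat
    and f :: "'a::{finite,field} poly poly"
  assumes "prime p" and "odd p" and "h \<ge> 1" and "card (UNIV :: 'a set) = p ^ h"
    and "eta > 0"
    and deg: "\<forall>g \<in> Gam p f eta. deg_curve p f g \<le> nu"
    and "2 \<le> rho1" "rho1 \<le> eta" "2 \<le> rho2" "rho2 \<le> p" "rho3 \<le> p^2 - 1"
    and cnt: "card {g \<in> Gam p f eta.
                 card (Zpts p f g) \<ge> nu * ((eta - rho1) + (p - rho2)) + 1} \<ge> rho3 + 1"
  shows
    "(\<forall>a b c. (a,b,c) \<in> Tset p f eta \<longrightarrow>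
        (let F2 = {(a, b + of_nat d, c) | d. d < p};
             F1 = {Q \<in> Tset p f eta. snd (snd Q) = c};
             C = eval_code (Tset p f eta) (eta - rho1) (p - rho2) rho3
         in F2 \<subseteq> Tset p f eta \<and> card F2 = p
            \<and> code_dim (puncture C F2) \<le> p - rho2 + 1
            \<and> min_dist F2 (puncture C F2) \<ge> enat rho2
            \<and> code_dim (puncture C F1) \<le> (eta - rho1 + 1) * (p - rho2 + 1)
            \<and> min_dist F1 (puncture C F1) \<ge> enat (rho1 * rho2)
            \<and> F2 \<subseteq> F1))
     \<and> inj_on (eval_map (Tset p f eta) (eta - rho1) (p - rho2) rho3)
              (box_coeffs (eta - rho1) (p - rho2) rho3)
     \<and> code_dim (eval_code (Tset p f eta) (eta - rho1) (p - rho2) rho3)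
          = (eta - rho1 + 1) * (p - rho2 + 1) * (rho3 + 1)"
proof -
  note pr = assms(1)
  have CH: "CHAR('a) = p" by (rule char_p[OF assms(1,4,3)])
  then have prC: "prime CHAR('a)" using pr by simp
  have pC: "p = CHAR('a)" using CH by simp
  define A where "A = eta - rho1"
  define B where "B = p - rho2"
  define T where "T = Tset p f eta"
  have AB: "A < eta" "B < p" using assms(7,8,9,10) by (auto simp: A_def B_def)
  have rA: "eta - A = rho1" "p - B = rho2" using assms(8,10) by (auto simp: A_def B_def)
  have cG: "rho3 < card (Gam p f eta)"
  proof -
    have "card {g \<in> Gam p f eta. card (Zpts p f g) \<ge> nu * ((eta - rho1) + (p - rho2)) + 1} \<le> card (Gam p f eta)"
      by (intro card_mono) auto
    then show ?thesis using cnt by simp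
  qed
  have injz: "co = (\<lambda>i j k. 0)" if "co \<in> box_coeffs A B rho3" "\<forall>P\<in>T. mono_eval A B rho3 co P = 0" for co
    using inj_zero[OF prC pC AB(1) AB(2) cG that(1)] that(2) by (simp add: T_def)
  have inj: "inj_on (eval_map T A B rho3) (box_coeffs A B rho3)"
  proof (rule inj_onI)
    fix co1 co2 assume c: "co1 \<in> box_coeffs A B rho3" "co2 \<in> box_coeffs A B rho3"
      "eval_map T A B rho3 co1 = eval_map T A B rho3 co2"
    have "\<forall>P\<in>T. mono_eval A B rho3 (\<lambda>i j k. co1 i j k - co2 i j k) P = 0"
    proof
      fix P assume "P \<in> T"
      then have "eval_map T A B rho3 co1 P = eval_map T A B rho3 co2 P" using c(3) by simp
      then show "mono_eval A B rho3 (\<lambda>i j k. co1 i j k - co2 i j k) P = 0"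
        using \<open>P \<in> T\<close> by (simp add: eval_map_def me_diff)
    qed
    then have "(\<lambda>i j k. co1 i j k - co2 i j k) = (\<lambda>i j k. 0)" using injz box_diff[OF c(1,2)] by blast
    then show "co1 = co2" by (auto simp: fun_eq_iff dest: fun_cong)
  qed
  have part1: "(let F2 = {(a, b + of_nat d, c) | d. d < p};
             F1 = {Q \<in> T. snd (snd Q) = c};
             C = eval_code T A B rho3
         in F2 \<subseteq> T \<and> card F2 = p
            \<and> code_dim (puncture C F2) \<le> p - rho2 + 1
            \<and> min_dist F2 (puncture C F2) \<ge> enat rho2
            \<and> code_dim (puncture C F1) \<le> (eta - rho1 + 1) * (p - rho2 + 1)
            \<and> min_dist F1 (puncture C F1) \<ge> enat (rho1 * rho2)
            \<and> F2 \<subseteq> F1)" if abc: "(a,b,c) \<in> T" for a b c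
  proof -
    define F2 where "F2 = {(a, b + of_nat d, c) | d. d < p}"
    define F1 where "F1 = {Q \<in> T. snd (snd Q) = c}"
    have abc': "(a,b,c) \<in> Tset p f eta" using abc by (simp add: T_def)
    have s2: "F2 \<subseteq> T" using fiber_T[OF prC pC abc'] by (auto simp: F2_def T_def)
    have "F2 = (\<lambda>d. (a, b + of_nat d, c)) ` {..<CHAR('a)}" by (auto simp: F2_def pC)
    moreover have "inj_on (\<lambda>d. (a, b + of_nat d, c)) {..<CHAR('a)}"
      using inj_shift[of b] by (auto simp: inj_on_def)
    ultimately have c2: "card F2 = p" using pC by (simp add: card_image)
    have d2: "code_dim (puncture (eval_code T A B rho3) F2) \<le> p - rho2 + 1"
      using dim_F2[OF prC pC abc' F2_def] by (simp add: T_def B_def)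
    have m2: "enat rho2 \<le> min_dist F2 (puncture (eval_code T A B rho3) F2)"
    proof (rule dist_generic[OF s2])
      fix co assume "co \<in> box_coeffs A B rho3" "\<exists>P\<in>F2. mono_eval A B rho3 co P \<noteq> 0"
      then show "rho2 \<le> card {P \<in> F2. mono_eval A B rho3 co P \<noteq> 0}"
        using dist_F2[OF prC pC abc' AB(2) F2_def] rA by simp
    qed
    have d1: "code_dim (puncture (eval_code T A B rho3) F1) \<le> (eta - rho1 + 1) * (p - rho2 + 1)"
      using dim_F1[of F1 p f eta c A B rho3] by (simp add: F1_def T_def A_def B_def)
    have m1: "enat (rho1 * rho2) \<le> min_dist F1 (puncture (eval_code T A B rho3) F1)"
    proof (rule dist_generic)
      show "F1 \<subseteq> T" by (auto simp: F1_def)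
      fix co assume "co \<in> box_coeffs A B rho3" "\<exists>P\<in>F1. mono_eval A B rho3 co P \<noteq> 0"
      then have "(eta - A) * (p - B) \<le> card {P \<in> F1. mono_eval A B rho3 co P \<noteq> 0}"
        by (intro dist_F1[OF prC pC abc' AB(2)]) (auto simp: F1_def T_def)
      then show "rho1 * rho2 \<le> card {P \<in> F1. mono_eval A B rho3 co P \<noteq> 0}"
        using rA by simp
    qed
    have s21: "F2 \<subseteq> F1" using s2 by (auto simp: F1_def F2_def)
    show ?thesis unfolding Let_def F1_def[symmetric] F2_def[symmetric]
      using s2 c2 d2 m2 d1 m1 s21 by blast
  qed
  show ?thesis
    using part1 inj full_dim[OF inj] unfolding T_def A_def B_def by blast
qed

end
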